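(* Suppose Assumption A holds. If the quadratic eigenvalue multiplicity $k$ satisfies $k\ge m+2$, then $\operatorname{conv}(\mathcal D)=\mathcal D_{\mathrm{SDP}}$.
   Context: Fix integers $N\ge 1$, $m_I,m_E\ge 0$, $m:=m_I+m_E\ge 1$; $[a,b]=\{a,\dots,b\}$, $[n]=[1,n]$. For $i\in[0,m]$ let $q_i(x)=x^\top A_ix+2b_i^\top x+c_i$ with $A_i\in\mathbb S^N$, $b_i\in\mathbb R^N$, $c_i\in\mathbb R$. $\mathcal D:=\{(x,t)\in\mathbb R^N\times\mathbb R: q_0(x)\le 2t,\ q_i(x)\le0\ \forall i\in[m_I],\ q_i(x)=0\ \forall i\in[m_I+1,m]\}$. Let $Q_i=\begin{pmatrix}c_i& b_i^\top\\ b_i& A_i\end{pmatrix}$; $\mathcal D_{\mathrm{SDP}}:=\{(x,t):\exists X\in\mathbb S^N$ with $Y=\begin{pmatrix}1&x^\top\\ x& X\end{pmatrix}\succeq0$, $\langle Q_0,Y\rangle\le 2t$, $\langle Q_i,Y\rangle\le 0\ \forall i\in[m_I]$, $\langle Q_i,Y\rangle= 0\ \forall i\in[m_I+1,m]\}$. $A(\gamma)=A_0+\sum_{i=1}^m\gamma_iA_i$. Assumption A: the QCQP feasible set $\{x: q_i(x)\le0\ \forall i\in[m_I],\ q_i(x)=0\ \forall i\in[m_I+1,m]\}$ is nonempty and some $\gamma^*\in\mathbb R^m$ with $\gamma^*_i\ge0$ ($i\in[m_I]$) has $A(\gamma^* )\succ0$. The quadratic eigenvalue multiplicity is the largest integer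 $k$ (with $N=nk$) such that for every $i\in[0,m]$ there is $\mathcal A_i\in\mathbb S^n$ with $A_i=I_k\otimes\mathcal A_i$. *)

theory Defs
  imports Main "HOL-Analysis.Analysis"
begin

text \<open>Vectors of R^N are functions nat => real using indices 0..N-1
  (entries at indices >= N are required to be 0). Matrices in S^N are functions
  nat => nat => real, only entries with indices < N are meaningful.
  A family (A i) for i in [0,m] is a function nat => (nat => nat => real), etc.\<close>

definition vec_on :: "nat \<Rightarrow> (nat \<Rightarrow> real) \<Rightarrow> bool" where
  "vec_on N x \<longleftrightarrow> (\<forall>j\<ge>N. x j = 0)"

definition sym_mat :: "nat \<Rightarrow> (nat \<Rightarrow> nat \<Rightarrow> real) \<Rightarrow> bool" where
  "sym_mat n M \<longleftrightarrow> (\<forall>r<n. \<forall>s<n. M r s = M s r)"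

definition qform :: "nat \<Rightarrow> (nat \<Rightarrow> nat \<Rightarrow> real) \<Rightarrow> (nat \<Rightarrow> real) \<Rightarrow> real" where
  "qform n M v = (\<Sum>r<n. \<Sum>s<n. v r * M r s * v s)"

definition psd_mat :: "nat \<Rightarrow> (nat \<Rightarrow> nat \<Rightarrow> real) \<Rightarrow> bool" where
  "psd_mat n M \<longleftrightarrow> sym_mat n M \<and> (\<forall>v. qform n M v \<ge> 0)"

definition pd_mat :: "nat \<Rightarrow> (nat \<Rightarrow> nat \<Rightarrow> real) \<Rightarrow> bool" where
  "pd_mat n M \<longleftrightarrow> sym_mat n M \<and> (\<forall>v. (\<exists>r<n. v r \<noteq> 0) \<longrightarrow> qform n M v > 0)"

definition frob :: "nat \<Rightarrow> (nat \<Rightarrow> nat \<Rightarrow> real) \<Rightarrow> (nat \<Rightarrow> nat \<Rightarrow> real) \<Rightarrow> real" where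
  "frob n M Y = (\<Sum>r<n. \<Sum>s<n. M r s * Y r s)"

definition qfun :: "nat \<Rightarrow> (nat \<Rightarrow> nat \<Rightarrow> real) \<Rightarrow> (nat \<Rightarrow> real) \<Rightarrow> real \<Rightarrow> (nat \<Rightarrow> real) \<Rightarrow> real" where
  "qfun N Ai bi ci x = qform N Ai x + 2 * (\<Sum>r<N. bi r * x r) + ci"

text \<open>The (N+1)x(N+1) block matrix [[c, b^T],[b, A]] (index 0 is the homogenizing one).\<close>
definition block_mat :: "real \<Rightarrow> (nat \<Rightarrow> real) \<Rightarrow> (nat \<Rightarrow> nat \<Rightarrow> real) \<Rightarrow> nat \<Rightarrow> nat \<Rightarrow> real" where
  "block_mat c b A r s =
     (if r = 0 \<and> s = 0 then c
      else if r = 0 then b (s - 1)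
      else if s = 0 then b (r - 1)
      else A (r - 1) (s - 1))"

definition feasible :: "nat \<Rightarrow> nat \<Rightarrow> nat \<Rightarrow> (nat \<Rightarrow> nat \<Rightarrow> nat \<Rightarrow> real) \<Rightarrow> (nat \<Rightarrow> nat \<Rightarrow> real)
    \<Rightarrow> (nat \<Rightarrow> real) \<Rightarrow> (nat \<Rightarrow> real) \<Rightarrow> bool" where
  "feasible N mI m A b c x \<longleftrightarrow> vec_on N x
     \<and> (\<forall>i\<in>{1..mI}. qfun N (A i) (b i) (c i) x \<le> 0)
     \<and> (\<forall>i\<in>{mI+1..m}. qfun N (A i) (b i) (c i) x = 0)"

definition Dset :: "nat \<Rightarrow> nat \<Rightarrow> nat \<Rightarrow> (nat \<Rightarrow> nat \<Rightarrow> nat \<Rightarrow> real) \<Rightarrow> (nat \<Rightarrow> nat \<Rightarrow> real)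
    \<Rightarrow> (nat \<Rightarrow> real) \<Rightarrow> ((nat \<Rightarrow> real) \<times> real) set" where
  "Dset N mI m A b c = {(x, t). feasible N mI m A b c x \<and> qfun N (A 0) (b 0) (c 0) x \<le> 2 * t}"

definition Dsdp :: "nat \<Rightarrow> nat \<Rightarrow> nat \<Rightarrow> (nat \<Rightarrow> nat \<Rightarrow> nat \<Rightarrow> real) \<Rightarrow> (nat \<Rightarrow> nat \<Rightarrow> real)
    \<Rightarrow> (nat \<Rightarrow> real) \<Rightarrow> ((nat \<Rightarrow> real) \<times> real) set" where
  "Dsdp N mI m A b c = {(x, t). vec_on N x \<and> (\<exists>X. sym_mat N X \<and>
      (let Y = block_mat 1 x X in
        psd_mat (N + 1) Y
        \<and> frob (N + 1) (block_mat (c 0) (b 0) (A 0)) Y \<le> 2 * t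
        \<and> (\<forall>i\<in>{1..mI}. frob (N + 1) (block_mat (c i) (b i) (A i)) Y \<le> 0)
        \<and> (\<forall>i\<in>{mI+1..m}. frob (N + 1) (block_mat (c i) (b i) (A i)) Y = 0)))}"

definition conv_hull :: "((nat \<Rightarrow> real) \<times> real) set \<Rightarrow> ((nat \<Rightarrow> real) \<times> real) set" where
  "conv_hull S = {p. \<exists>(r::nat) (w::nat \<Rightarrow> real) P.
      (\<forall>j<r. 0 \<le> w j \<and> P j \<in> S) \<and> (\<Sum>j<r. w j) = 1
      \<and> p = ((\<lambda>l. \<Sum>j<r. w j * fst (P j) l), (\<Sum>j<r. w j * snd (P j)))}"

definition Agamma :: "nat \<Rightarrow> (nat \<Rightarrow> nat \<Rightarrow> nat \<Rightarrow> real) \<Rightarrow> (nat \<Rightarrow> real) \<Rightarrow> nat \<Rightarrow> nat \<Rightarrow> real" where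
  "Agamma m A \<gamma> r s = A 0 r s + (\<Sum>i\<in>{1..m}. \<gamma> i * A i r s)"

text \<open>I_k (Kronecker) M for an n x n matrix M: entry (p*n+a, q*n+b) is [p=q] M a b.\<close>
definition kron_I :: "nat \<Rightarrow> (nat \<Rightarrow> nat \<Rightarrow> real) \<Rightarrow> nat \<Rightarrow> nat \<Rightarrow> real" where
  "kron_I n M r s = (if r div n = s div n then M (r mod n) (s mod n) else 0)"

definition has_multiplicity :: "nat \<Rightarrow> nat \<Rightarrow> (nat \<Rightarrow> nat \<Rightarrow> nat \<Rightarrow> real) \<Rightarrow> nat \<Rightarrow> bool" where
  "has_multiplicity N m A k \<longleftrightarrow> (\<exists>n. N = n * k \<and>
     (\<forall>i\<le>m. \<exists>M. sym_mat n M \<and> (\<forall>r<N. \<forall>s<N. A i r s = kron_I n M r s)))"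

definition quad_eig_mult :: "nat \<Rightarrow> nat \<Rightarrow> (nat \<Rightarrow> nat \<Rightarrow> nat \<Rightarrow> real) \<Rightarrow> nat" where
  "quad_eig_mult N m A = (GREATEST k. has_multiplicity N m A k)"

end

theory Submission
  imports Defs
begin

lemma sum_blocks:
  fixes f :: "nat \<Rightarrow> real"
  shows "(\<Sum>r<n*k. f r) = (\<Sum>p<k. \<Sum>a<n. f (p*n+a))"
proof -
  have "(\<Sum>r<k*n. f r) = (\<Sum>p<k. \<Sum>r\<in>{p*n..<p*n+n}. f r)"
    by (rule sum.nat_group[symmetric])
  also have "\<dots> = (\<Sum>p<k. \<Sum>a<n. f (p*n+a))"
  proof (rule sum.cong[OF refl])
    fix p
    have "(\<Sum>r\<in>{0+p*n..<n+p*n}. f r) = (\<Sum>a\<in>{0..<n}. f (a + p*n))"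
      by (rule sum.shift_bounds_nat_ivl)
    then show "(\<Sum>r\<in>{p*n..<p*n+n}. f r) = (\<Sum>a<n. f (p*n+a))"
      by (simp add: atLeast0LessThan add.commute)
  qed
  finally show ?thesis by (simp add: mult.commute)
qed

lemma frob_block:
  "frob (Suc N) (block_mat c b A) (block_mat 1 x X) = qfun N A b c x + frob N A (\<lambda>r s. X r s - x r * x s)"
  unfolding frob_def qfun_def qform_def
  apply (simp only: sum.lessThan_Suc_shift)
  apply (simp add: block_mat_def del: sum.lessThan_Suc)
  apply (simp add: algebra_simps sum_subtractf sum.distrib sum_distrib_left del: sum.lessThan_Suc)
  done

lemma sym_app: "sym_mat n M \<Longrightarrow> r < n \<Longrightarrow> s < n \<Longrightarrow> M r s = M s r"
  unfolding sym_mat_def by blast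

definition bil :: "nat \<Rightarrow> (nat \<Rightarrow> nat \<Rightarrow> real) \<Rightarrow> (nat \<Rightarrow> real) \<Rightarrow> (nat \<Rightarrow> real) \<Rightarrow> real" where
  "bil n M v w = (\<Sum>r<n. \<Sum>s<n. v r * M r s * w s)"

lemma qform_bil: "qform n M v = bil n M v v"
  by (simp add: qform_def bil_def)

lemma bil_add_left: "bil n M (\<lambda>r. v r + w r) u = bil n M v u + bil n M w u"
  by (simp add: bil_def algebra_simps sum.distrib)
lemma bil_add_right: "bil n M u (\<lambda>r. v r + w r) = bil n M u v + bil n M u w"
  by (simp add: bil_def algebra_simps sum.distrib)
lemma bil_diff_left: "bil n M (\<lambda>r. v r - w r) u = bil n M v u - bil n M w u"
  by (simp add: bil_def algebra_simps sum_subtractf)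
lemma bil_diff_right: "bil n M u (\<lambda>r. v r - w r) = bil n M u v - bil n M u w"
  by (simp add: bil_def algebra_simps sum_subtractf)
lemma bil_scale_left: "bil n M (\<lambda>r. a * v r) u = a * bil n M v u"
  by (simp add: bil_def algebra_simps sum_distrib_left)
lemma bil_scale_right: "bil n M u (\<lambda>r. a * v r) = a * bil n M u v"
  by (simp add: bil_def algebra_simps sum_distrib_left)
lemma bil_sym: "sym_mat n M \<Longrightarrow> bil n M u v = bil n M v u"
  unfolding bil_def sym_mat_def
  apply (subst sum.swap)
  apply (intro sum.cong refl)
  apply (simp add: mult.commute)
  done
lemma bil_delta_left: "j < n \<Longrightarrow> bil n M (\<lambda>r. if r = j then 1 else 0) w = (\<Sum>s<n. M j s * w s)"
proof -
  assume j: "j < n"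
  have "bil n M (\<lambda>r. if r = j then 1 else 0) w = (\<Sum>r<n. if r = j then (\<Sum>s<n. M r s * w s) else 0)"
    unfolding bil_def by (intro sum.cong) auto
  also have "\<dots> = (\<Sum>s<n. M j s * w s)" using j by simp
  finally show ?thesis .
qed
lemma bil_delta_right: "j < n \<Longrightarrow> bil n M w (\<lambda>r. if r = j then 1 else 0) = (\<Sum>r<n. w r * M r j)"
proof -
  assume j: "j < n"
  have "bil n M w (\<lambda>r. if r = j then 1 else 0) = (\<Sum>r<n. \<Sum>s<n. if s = j then w r * M r s else 0)"
    unfolding bil_def by (intro sum.cong) auto
  also have "\<dots> = (\<Sum>r<n. w r * M r j)" using j by simp
  finally show ?thesis .
qed

definition ev :: "nat \<Rightarrow> nat \<Rightarrow> real" where "ev j = (\<lambda>r. if r = j then 1 else 0)"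

lemma bil_ev_ev: "j < n \<Longrightarrow> s < n \<Longrightarrow> bil n M (ev j) (ev s) = M j s"
proof -
  assume a: "j < n" "s < n"
  have "bil n M (ev j) (ev s) = (\<Sum>t<n. if t = s then M j t else 0)"
    unfolding ev_def using a by (simp add: bil_delta_left if_distrib cong: if_cong)
  then show ?thesis using a by simp
qed

lemma qform_two:
  assumes "j < n" "s < n"
  shows "qform n M (\<lambda>r. a * ev j r + b * ev s r) = a*a*M j j + a*b*(M j s + M s j) + b*b*M s s"
  unfolding qform_bil
  by (simp add: bil_add_left bil_add_right bil_scale_left bil_scale_right bil_ev_ev assms algebra_simps)

lemma psd_zero_row:
  assumes psd: "psd_mat n Z" and j: "j < n" and s: "s < n" and z: "Z j j = 0"
  shows "Z j s = 0"
proof (rule ccontr)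
  assume ne: "Z j s \<noteq> 0"
  have sy: "Z s j = Z j s" using psd j s by (simp add: psd_mat_def sym_mat_def)
  define t where "t = - (Z s s + 1) / (2 * Z j s)"
  have "0 \<le> qform n Z (\<lambda>r. t * ev j r + 1 * ev s r)" using psd by (simp add: psd_mat_def)
  also have "\<dots> = t*t*Z j j + t*1*(Z j s + Z s j) + 1*1*Z s s" by (rule qform_two[OF j s])
  also have "\<dots> = 2 * t * Z j s + Z s s" using z sy by simp
  also have "\<dots> = -1" using ne by (simp add: t_def field_simps)
  finally show False by simp
qed

lemma qform_minus_rank1:
  "qform n (\<lambda>r s. Z r s - z r * z s) v = qform n Z v - (\<Sum>r<n. z r * v r)^2"
  unfolding qform_def power2_eq_square sum_product
  by (simp add: algebra_simps sum_subtractf)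

lemma psd_schur:
  assumes psd: "psd_mat n Z" and j: "j < n" and pos: "Z j j > 0"
  defines "z \<equiv> (\<lambda>r. Z r j / sqrt (Z j j))"
  shows "psd_mat n (\<lambda>r s. Z r s - z r * z s)"
    and "\<And>s. s < n \<Longrightarrow> Z j s - z j * z s = 0"
    and "\<And>s. s < n \<Longrightarrow> Z s j - z s * z j = 0"
proof -
  have sy: "sym_mat n Z" using psd by (simp add: psd_mat_def)
  have sq: "sqrt (Z j j) * sqrt (Z j j) = Z j j" using pos by simp
  have zj: "z j = sqrt (Z j j)" unfolding z_def using pos
    by (metis less_eq_real_def real_div_sqrt)
  show e1: "\<And>s. s < n \<Longrightarrow> Z j s - z j * z s = 0"
  proof -
    fix s assume s: "s < n"
    have "Z s j = Z j s" using sy s j by (simp add: sym_mat_def)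
    then show "Z j s - z j * z s = 0" using pos unfolding zj by (simp add: z_def)
  qed
  show "\<And>s. s < n \<Longrightarrow> Z s j - z s * z j = 0"
  proof -
    fix s assume s: "s < n"
    have "Z s j = Z j s" using sy s j by (simp add: sym_mat_def)
    then show "Z s j - z s * z j = 0" using e1[OF s] by (simp add: mult.commute)
  qed
  show "psd_mat n (\<lambda>r s. Z r s - z r * z s)"
    unfolding psd_mat_def
  proof (intro conjI allI)
    show "sym_mat n (\<lambda>r s. Z r s - z r * z s)"
      using sy unfolding sym_mat_def z_def by (simp add: mult.commute)
  next
    fix v
    define S where "S = (\<Sum>s<n. Z j s * v s)"
    define c where "c = S / Z j j"
    have bev: "bil n Z (ev j) v = S" unfolding ev_def S_def using j by (simp add: bil_delta_left)
    have bve: "bil n Z v (ev j) = S"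
    proof -
      have "bil n Z v (ev j) = (\<Sum>r<n. v r * Z r j)" unfolding ev_def using j by (simp add: bil_delta_right)
      also have "\<dots> = S" unfolding S_def using sy j by (intro sum.cong refl) (simp add: sym_mat_def mult.commute)
      finally show ?thesis .
    qed
    have bee: "bil n Z (ev j) (ev j) = Z j j" by (rule bil_ev_ev[OF j j])
    have "0 \<le> qform n Z (\<lambda>r. v r - c * ev j r)" using psd by (simp add: psd_mat_def)
    also have "\<dots> = qform n Z v - c * S - c * S + c * c * Z j j"
      unfolding qform_bil
      by (simp add: bil_diff_left bil_diff_right bil_scale_left bil_scale_right bev bve bee algebra_simps)
    also have "\<dots> = qform n Z v - S * S / Z j j" using pos by (simp add: c_def field_simps)
    also have "S * S / Z j j = (\<Sum>r<n. z r * v r)^2"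
    proof -
      have "(\<Sum>r<n. z r * v r) = S / sqrt (Z j j)"
        unfolding z_def S_def sum_divide_distrib
        using sy j by (intro sum.cong refl) (simp add: sym_mat_def mult.commute)
      then show ?thesis using pos by (simp add: power2_eq_square sq)
    qed
    finally show "0 \<le> qform n (\<lambda>r s. Z r s - z r * z s) v" by (simp add: qform_minus_rank1)
  qed
qed

lemma psd_diag_nonneg: "psd_mat n Z \<Longrightarrow> j < n \<Longrightarrow> Z j j \<ge> 0"
  using bil_ev_ev[of j n j Z] by (metis psd_mat_def qform_bil)

lemma psd_decomp_aux:
  "psd_mat n Z \<Longrightarrow> (\<forall>r s. r < n \<longrightarrow> s < n \<longrightarrow> (j \<le> r \<or> j \<le> s) \<longrightarrow> Z r s = 0)
   \<Longrightarrow> \<exists>zs. \<forall>r<n. \<forall>s<n. Z r s = (\<Sum>z\<leftarrow>zs. z r * z s)"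
proof (induction j arbitrary: Z)
  case 0
  then show ?case by (intro exI[of _ "[]"]) auto
next
  case (Suc j)
  note psd = Suc.prems(1) and supp = Suc.prems(2)
  have sy: "sym_mat n Z" using psd by (simp add: psd_mat_def)
  show ?case
  proof (cases "j < n")
    case False
    have "\<forall>r s. r < n \<longrightarrow> s < n \<longrightarrow> (j \<le> r \<or> j \<le> s) \<longrightarrow> Z r s = 0"
      using False by auto
    then show ?thesis using Suc.IH[OF psd] by blast
  next
    case jn: True
    show ?thesis
    proof (cases "Z j j = 0")
      case True
      have row: "Z j s = 0" if "s < n" for s using psd_zero_row[OF psd jn that True] .
      have col: "Z s j = 0" if "s < n" for s using row[OF that] sym_app[OF sy that jn] by simp
      have "\<forall>r s. r < n \<longrightarrow> s < n \<longrightarrow> (j \<le> r \<or> j \<le> s) \<longrightarrow> Z r s = 0"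
      proof (intro allI impI)
        fix r s assume rs: "r < n" "s < n" "j \<le> r \<or> j \<le> s"
        show "Z r s = 0"
        proof (cases "r = j \<or> s = j")
          case True then show ?thesis using row col rs by auto
        next
          case False then show ?thesis using supp rs by auto
        qed
      qed
      then show ?thesis using Suc.IH[OF psd] by blast
    next
      case False
      have pos: "Z j j > 0" using psd_diag_nonneg[OF psd jn] False by simp
      define z where "z = (\<lambda>r. Z r j / sqrt (Z j j))"
      have sch: "psd_mat n (\<lambda>r s. Z r s - z r * z s)" "\<And>s. s < n \<Longrightarrow> Z j s - z j * z s = 0" "\<And>s. s < n \<Longrightarrow> Z s j - z s * z j = 0"
        using psd_schur[OF psd jn pos] unfolding z_def by auto
      have "\<forall>r s. r < n \<longrightarrow> s < n \<longrightarrow> (j \<le> r \<or> j \<le> s) \<longrightarrow> Z r s - z r * z s = 0"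
      proof (intro allI impI)
        fix r s assume rs: "r < n" "s < n" "j \<le> r \<or> j \<le> s"
        show "Z r s - z r * z s = 0"
        proof (cases "r = j")
          case True then show ?thesis using sch(2) rs by auto
        next
          case rj: False
          show ?thesis
          proof (cases "s = j")
            case True then show ?thesis using sch(3) rs by auto
          next
            case False
            have "Suc j \<le> r \<or> Suc j \<le> s" using rs rj False by auto
            moreover have "Z r s = 0" using supp rs \<open>Suc j \<le> r \<or> Suc j \<le> s\<close> by auto
            moreover have "Suc j \<le> r \<Longrightarrow> z r = 0" using supp rs jn by (auto simp: z_def)
            moreover have "Suc j \<le> s \<Longrightarrow> z s = 0" using supp rs jn by (auto simp: z_def)
            ultimately show ?thesis by auto
          qed
        qed
      qed
      then obtain zs where zs: "\<forall>r<n. \<forall>s<n. Z r s - z r * z s = (\<Sum>z\<leftarrow>zs. z r * z s)"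
        using Suc.IH[OF sch(1)] by blast
      show ?thesis
      proof (rule exI[of _ "z # zs"], intro allI impI)
        fix r s assume "r < n" "s < n"
        then have "Z r s - z r * z s = (\<Sum>z\<leftarrow>zs. z r * z s)" using zs by blast
        then show "Z r s = (\<Sum>z\<leftarrow>z # zs. z r * z s)" by simp
      qed
    qed
  qed
qed

lemma psd_decomp:
  "psd_mat n Z \<Longrightarrow> \<exists>zs. \<forall>r<n. \<forall>s<n. Z r s = (\<Sum>z\<leftarrow>zs. z r * z s)"
  using psd_decomp_aux[of n Z n] by auto


lemma sum_split_add: "(\<Sum>j<(a::nat)+b. f j) = (\<Sum>j<a. f j) + (\<Sum>j<b. f (a+j))"
  by (induction b) (simp_all add: add.assoc)

lemma conv_mem: "p \<in> S \<Longrightarrow> p \<in> conv_hull S"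
  unfolding conv_hull_def
  by (rule CollectI, rule exI[of _ 1], rule exI[of _ "\<lambda>_. 1"], rule exI[of _ "\<lambda>_. p"]) auto

lemma conv_mid:
  assumes "p \<in> conv_hull S" "q \<in> conv_hull S"
  shows "((\<lambda>l. (fst p l + fst q l) / 2), (snd p + snd q) / 2) \<in> conv_hull S"
proof -
  obtain r1 :: nat and w1 P1 where 1: "\<forall>j<r1. 0 \<le> w1 j \<and> P1 j \<in> S" "(\<Sum>j<r1. w1 j) = 1"
    "p = ((\<lambda>l. \<Sum>j<r1. w1 j * fst (P1 j) l), (\<Sum>j<r1. w1 j * snd (P1 j)))"
    using assms(1) unfolding conv_hull_def by blast
  obtain r2 :: nat and w2 P2 where 2: "\<forall>j<r2. 0 \<le> w2 j \<and> P2 j \<in> S" "(\<Sum>j<r2. w2 j) = 1"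
    "q = ((\<lambda>l. \<Sum>j<r2. w2 j * fst (P2 j) l), (\<Sum>j<r2. w2 j * snd (P2 j)))"
    using assms(2) unfolding conv_hull_def by blast
  define w where "w = (\<lambda>j. if j < r1 then w1 j / 2 else w2 (j - r1) / 2)"
  define P where "P = (\<lambda>j. if j < r1 then P1 j else P2 (j - r1))"
  have a: "\<forall>j<r1+r2. 0 \<le> w j \<and> P j \<in> S"
    using 1(1) 2(1) unfolding w_def P_def by (auto simp: not_less)
  have b: "(\<Sum>j<r1+r2. w j) = 1"
    unfolding sum_split_add w_def using 1(2) 2(2) by (simp add: sum_divide_distrib[symmetric])
  have c: "(\<lambda>l. (fst p l + fst q l) / 2) = (\<lambda>l. \<Sum>j<r1+r2. w j * fst (P j) l)"
    unfolding sum_split_add w_def P_def 1(3) 2(3)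
    by (simp add: add_divide_distrib sum_divide_distrib)
  have d: "(snd p + snd q) / 2 = (\<Sum>j<r1+r2. w j * snd (P j))"
    unfolding sum_split_add w_def P_def 1(3) 2(3)
    by (simp add: add_divide_distrib sum_divide_distrib)
  show ?thesis unfolding conv_hull_def mem_Collect_eq
    apply (rule exI[of _ "r1+r2"], rule exI[of _ w], rule exI[of _ P])
    using a b c d by simp
qed


lemma kernel_exists:
  "finite S \<Longrightarrow> card S > m' \<Longrightarrow> \<exists>\<alpha>. (\<exists>q\<in>S. \<alpha> q \<noteq> 0) \<and> (\<forall>i<m'. (\<Sum>q\<in>S. \<alpha> q * h i q) = (0::real))"
proof (induction m' arbitrary: S h)
  case 0
  then obtain q0 where "q0 \<in> S" by (metis card.empty ex_in_conv less_irrefl)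
  then show ?case by (intro exI[of _ "\<lambda>q. if q = q0 then 1 else 0"]) auto
next
  case (Suc m')
  show ?case
  proof (cases "\<forall>q\<in>S. h m' q = 0")
    case True
    obtain \<alpha> where al: "\<exists>q\<in>S. \<alpha> q \<noteq> 0" "\<forall>i<m'. (\<Sum>q\<in>S. \<alpha> q * h i q) = 0"
      using Suc.IH[OF Suc.prems(1), of h] Suc.prems(2) by auto
    have "\<forall>i<Suc m'. (\<Sum>q\<in>S. \<alpha> q * h i q) = 0"
      using al(2) True by (auto simp: less_Suc_eq)
    then show ?thesis using al(1) by blast
  next
    case False
    then obtain q0 where q0: "q0 \<in> S" "h m' q0 \<noteq> 0" by blast
    define H where "H = h m'"
    define S' where "S' = S - {q0}"
    have fS': "finite S'" using Suc.prems(1) by (simp add: S'_def)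
    have cS': "card S' > m'" using Suc.prems q0(1) by (simp add: S'_def)
    define h' where "h' = (\<lambda>i q. h i q - h i q0 * H q / H q0)"
    obtain \<beta> where be: "\<exists>q\<in>S'. \<beta> q \<noteq> 0" "\<forall>i<m'. (\<Sum>q\<in>S'. \<beta> q * h' i q) = 0"
      using Suc.IH[OF fS' cS', of h'] by auto
    define T where "T = (\<Sum>q\<in>S'. \<beta> q * H q)"
    define \<alpha> where "\<alpha> = (\<lambda>q. if q = q0 then - T / H q0 else \<beta> q)"
    have HS: "H q0 \<noteq> 0" using q0 by (simp add: H_def)
    have split: "(\<Sum>q\<in>S. \<alpha> q * f q) = \<alpha> q0 * f q0 + (\<Sum>q\<in>S'. \<beta> q * f q)" for f
    proof -
      have "(\<Sum>q\<in>S. \<alpha> q * f q) = \<alpha> q0 * f q0 + (\<Sum>q\<in>S'. \<alpha> q * f q)"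
        unfolding S'_def using Suc.prems(1) q0(1) by (rule sum.remove)
      also have "(\<Sum>q\<in>S'. \<alpha> q * f q) = (\<Sum>q\<in>S'. \<beta> q * f q)"
        unfolding \<alpha>_def S'_def by (intro sum.cong) auto
      finally show ?thesis .
    qed
    have "\<forall>i<Suc m'. (\<Sum>q\<in>S. \<alpha> q * h i q) = 0"
    proof (intro allI impI)
      fix i assume i: "i < Suc m'"
      show "(\<Sum>q\<in>S. \<alpha> q * h i q) = 0"
      proof (cases "i = m'")
        case True
        then show ?thesis unfolding split using HS by (simp add: \<alpha>_def T_def H_def)
      next
        case False
        then have im: "i < m'" using i by simp
        have "(\<Sum>q\<in>S'. \<beta> q * h' i q) = (\<Sum>q\<in>S'. \<beta> q * h i q) - h i q0 / H q0 * T"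
          unfolding h'_def T_def by (simp add: algebra_simps sum_subtractf sum_distrib_left sum_divide_distrib)
        then have "(\<Sum>q\<in>S'. \<beta> q * h i q) = h i q0 / H q0 * T" using be(2) im by simp
        then show ?thesis unfolding split using HS by (simp add: \<alpha>_def)
      qed
    qed
    moreover have "\<exists>q\<in>S. \<alpha> q \<noteq> 0"
    proof -
      obtain q1 where "q1 \<in> S'" "\<beta> q1 \<noteq> 0" using be(1) by blast
      then have "q1 \<in> S" "\<alpha> q1 \<noteq> 0" unfolding \<alpha>_def S'_def by auto
      then show ?thesis by blast
    qed
    ultimately show ?thesis by blast
  qed
qed

lemma divmod_blk: "a < (n::nat) \<Longrightarrow> (p*n+a) div n = p \<and> (p*n+a) mod n = a"
  by (simp add: add.commute)

lemma kron_blk: "a < n \<Longrightarrow> b < n \<Longrightarrow> kron_I n M (p*n+a) (q*n+b) = (if q = p then M a b else 0)"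
  unfolding kron_I_def using divmod_blk[of a n p] divmod_blk[of b n q] by auto

lemma qform_kron:
  assumes N: "N = n*k" and A: "\<forall>r<N. \<forall>s<N. A r s = kron_I n M r s"
  shows "qform N A z = (\<Sum>p<k. qform n M (\<lambda>a. z (p*n+a)))"
proof -
  have "qform N A z = (\<Sum>r<n*k. \<Sum>s<n*k. z r * kron_I n M r s * z s)"
    unfolding qform_def N using A N by (intro sum.cong refl) auto
  also have "\<dots> = (\<Sum>p<k. \<Sum>a<n. \<Sum>q<k. \<Sum>b<n. z (p*n+a) * kron_I n M (p*n+a) (q*n+b) * z (q*n+b))"
    by (simp add: sum_blocks)
  also have "\<dots> = (\<Sum>p<k. \<Sum>a<n. \<Sum>q<k. if q = p then (\<Sum>b<n. z (p*n+a) * M a b * z (p*n+b)) else 0)"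
    by (intro sum.cong refl) (auto simp: kron_blk)
  also have "\<dots> = (\<Sum>p<k. qform n M (\<lambda>a. z (p*n+a)))"
    unfolding qform_def by (rule sum.cong[OF refl], rule sum.cong[OF refl]) simp
  finally show ?thesis .
qed

lemma lin_kron:
  fixes g u :: "nat \<Rightarrow> real"
  assumes N: "N = n*k"
  shows "(\<Sum>r<N. g r * u r) = (\<Sum>p<k. \<Sum>a<n. g (p*n+a) * u (p*n+a))"
  unfolding N by (rule sum_blocks)

lemma blk_lt: "p < k \<Longrightarrow> a < n \<Longrightarrow> p*n + a < n*(k::nat)"
proof -
  assume "p < k" "a < n"
  then have "p*n + a < p*n + n" by simp
  also have "\<dots> = Suc p * n" by simp
  also have "\<dots> \<le> k * n" using \<open>p < k\<close> by (intro mult_right_mono) auto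
  finally show ?thesis by (simp add: mult.commute)
qed

lemma qform_cong_lt: "(\<And>a. a < n \<Longrightarrow> v a = w a) \<Longrightarrow> qform n M v = qform n M w"
  unfolding qform_def by (intro sum.cong refl) auto

lemma exists_u:
  fixes g :: "nat \<Rightarrow> nat \<Rightarrow> real"
  assumes N: "N = n*k" and km: "k > m'"
    and kron: "\<forall>i<m'. \<forall>r<N. \<forall>s<N. A i r s = kron_I n (M i) r s"
  shows "\<exists>u. vec_on N u \<and> (\<forall>i<m'. qform N (A i) u = qform n (M i) v \<and> (\<Sum>s<N. g i s * u s) = 0)"
proof -
  define h where "h = (\<lambda>i q. \<Sum>a<n. g i (q*n+a) * v a)"
  obtain \<alpha> where al: "\<exists>q\<in>{..<k}. \<alpha> q \<noteq> 0" "\<forall>i<m'. (\<Sum>q\<in>{..<k}. \<alpha> q * h i q) = 0"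
    using kernel_exists[of "{..<k}" m' h] km by auto
  define \<sigma> where "\<sigma> = (\<Sum>q<k. \<alpha> q * \<alpha> q)"
  have spos: "\<sigma> > 0"
  proof -
    obtain q1 where q1: "q1 < k" "\<alpha> q1 \<noteq> 0" using al(1) by blast
    have "\<alpha> q1 * \<alpha> q1 \<le> \<sigma>" unfolding \<sigma>_def
      by (rule member_le_sum) (use q1 in auto)
    moreover have "\<alpha> q1 * \<alpha> q1 > 0" using q1(2) not_real_square_gt_zero by blast
    ultimately show ?thesis by linarith
  qed
  define \<beta> where "\<beta> = (\<lambda>q. \<alpha> q / sqrt \<sigma>)"
  have sb: "(\<Sum>q<k. \<beta> q * \<beta> q) = 1"
  proof -
    have "(\<Sum>q<k. \<beta> q * \<beta> q) = (\<Sum>q<k. \<alpha> q * \<alpha> q) / \<sigma>"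
      unfolding \<beta>_def sum_divide_distrib using spos by (intro sum.cong refl) (simp add: power_divide)
    then show ?thesis using spos by (simp add: \<sigma>_def)
  qed
  define u where "u = (\<lambda>r. if r < N then \<beta> (r div n) * v (r mod n) else 0)"
  have ublk: "u (p*n+a) = \<beta> p * v a" if "p < k" "a < n" for p a
    using blk_lt[OF that] divmod_blk[OF that(2), of p] N by (simp add: u_def)
  have "vec_on N u" by (simp add: vec_on_def u_def)
  moreover have "\<forall>i<m'. qform N (A i) u = qform n (M i) v \<and> (\<Sum>s<N. g i s * u s) = 0"
  proof (intro allI impI conjI)
    fix i assume i: "i < m'"
    have "qform N (A i) u = (\<Sum>p<k. qform n (M i) (\<lambda>a. u (p*n+a)))"
      using qform_kron[OF N] kron i by blast
    also have "\<dots> = (\<Sum>p<k. \<beta> p * \<beta> p * qform n (M i) v)"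
    proof (intro sum.cong refl)
      fix p assume "p \<in> {..<k}"
      then have "qform n (M i) (\<lambda>a. u (p*n+a)) = qform n (M i) (\<lambda>a. \<beta> p * v a)"
        by (intro qform_cong_lt) (simp add: ublk)
      also have "\<dots> = \<beta> p * \<beta> p * qform n (M i) v"
        by (simp add: qform_bil bil_scale_left bil_scale_right)
      finally show "qform n (M i) (\<lambda>a. u (p*n+a)) = \<beta> p * \<beta> p * qform n (M i) v" .
    qed
    also have "\<dots> = qform n (M i) v"
      using sb by (simp add: sum_distrib_right[symmetric])
    finally show "qform N (A i) u = qform n (M i) v" .
    have "(\<Sum>s<N. g i s * u s) = (\<Sum>p<k. \<Sum>a<n. g i (p*n+a) * u (p*n+a))"
      by (rule lin_kron[OF N])
    also have "\<dots> = (\<Sum>p<k. \<beta> p * h i p)"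
      unfolding h_def sum_distrib_left
      by (intro sum.cong refl) (simp add: ublk)
    also have "\<dots> = (\<Sum>p<k. \<alpha> p * h i p) / sqrt \<sigma>"
      unfolding \<beta>_def sum_divide_distrib by simp
    also have "\<dots> = 0" using al(2) i by simp
    finally show "(\<Sum>s<N. g i s * u s) = 0" .
  qed
  ultimately show ?thesis by blast
qed

lemma bil_as_lin: "bil N A x u = (\<Sum>s<N. (\<Sum>r<N. x r * A r s) * u s)"
  unfolding bil_def by (subst sum.swap) (simp add: sum_distrib_right)

lemma qfun_shift:
  assumes sy: "sym_mat N A"
  shows "qfun N A bb cc (\<lambda>r. x r + e * u r) = qfun N A bb cc x + e*e*qform N A u
           + 2*e*(\<Sum>s<N. ((\<Sum>r<N. x r * A r s) + bb s) * u s)"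
proof -
  have "qform N A (\<lambda>r. x r + e * u r) = qform N A x + e * bil N A x u + e * bil N A u x + e*e*qform N A u"
    unfolding qform_bil by (simp add: bil_add_left bil_add_right bil_scale_left bil_scale_right algebra_simps)
  also have "bil N A u x = bil N A x u" using bil_sym[OF sy] by simp
  finally have q: "qform N A (\<lambda>r. x r + e * u r) = qform N A x + 2 * e * bil N A x u + e*e*qform N A u" by simp
  have l: "(\<Sum>r<N. bb r * (x r + e * u r)) = (\<Sum>r<N. bb r * x r) + e * (\<Sum>r<N. bb r * u r)"
    by (simp add: algebra_simps sum.distrib sum_distrib_left)
  show ?thesis unfolding qfun_def q l bil_as_lin
    by (simp add: algebra_simps sum.distrib)
qed

lemma main_ind:
  assumes N: "N = n*k" and km: "k > Suc m" and mI: "mI \<le> m"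
    and sy: "\<forall>i\<le>m. sym_mat N (A i)"
    and kron: "\<forall>i\<le>m. \<forall>r<N. \<forall>s<N. A i r s = kron_I n (M i) r s"
  shows "vec_on N x \<Longrightarrow>
    (\<forall>i\<in>{1..mI}. qfun N (A i) (b i) (c i) x + (\<Sum>v\<leftarrow>vs. qform n (M i) v) \<le> 0) \<Longrightarrow>
    (\<forall>i\<in>{mI+1..m}. qfun N (A i) (b i) (c i) x + (\<Sum>v\<leftarrow>vs. qform n (M i) v) = 0) \<Longrightarrow>
    qfun N (A 0) (b 0) (c 0) x + (\<Sum>v\<leftarrow>vs. qform n (M 0) v) \<le> 2 * t \<Longrightarrow>
    (x, t) \<in> conv_hull (Dset N mI m A b c)"
proof (induction vs arbitrary: x)
  case Nil
  then show ?case by (intro conv_mem) (simp add: Dset_def feasible_def)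
next
  case (Cons v vs)
  define g where "g = (\<lambda>i s. (\<Sum>r<N. x r * A i r s) + b i s)"
  have kron': "\<forall>i<Suc m. \<forall>r<N. \<forall>s<N. A i r s = kron_I n (M i) r s" using kron by auto
  obtain u where u: "vec_on N u" "\<forall>i<Suc m. qform N (A i) u = qform n (M i) v \<and> (\<Sum>s<N. g i s * u s) = 0"
    using exists_u[OF N km kron', of v g] by blast
  have sh: "qfun N (A i) (b i) (c i) (\<lambda>r. x r + e * u r) = qfun N (A i) (b i) (c i) x + qform n (M i) v"
    if "i \<le> m" "e * e = 1" for i e
  proof -
    have "qfun N (A i) (b i) (c i) (\<lambda>r. x r + e * u r) = qfun N (A i) (b i) (c i) x + e*e*qform N (A i) u
           + 2*e*(\<Sum>s<N. g i s * u s)"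
      unfolding g_def using qfun_shift sy that(1) by blast
    then show ?thesis using u(2) that by simp
  qed
  have vp: "vec_on N (\<lambda>r. x r + e * u r)" for e using Cons.prems(1) u(1) by (simp add: vec_on_def)
  have mem: "((\<lambda>r. x r + e * u r), t) \<in> conv_hull (Dset N mI m A b c)" if "e * e = 1" for e
  proof (rule Cons.IH[OF vp])
    show "\<forall>i\<in>{1..mI}. qfun N (A i) (b i) (c i) (\<lambda>r. x r + e * u r) + (\<Sum>v\<leftarrow>vs. qform n (M i) v) \<le> 0"
      using Cons.prems(2) sh[OF _ that] mI by (auto simp: add.assoc)
    show "\<forall>i\<in>{mI+1..m}. qfun N (A i) (b i) (c i) (\<lambda>r. x r + e * u r) + (\<Sum>v\<leftarrow>vs. qform n (M i) v) = 0"
      using Cons.prems(3) sh[OF _ that] by (auto simp: add.assoc)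
    show "qfun N (A 0) (b 0) (c 0) (\<lambda>r. x r + e * u r) + (\<Sum>v\<leftarrow>vs. qform n (M 0) v) \<le> 2 * t"
      using Cons.prems(4) sh[OF _ that, of 0] by (auto simp: add.assoc)
  qed
  have "((\<lambda>l. (fst ((\<lambda>r. x r + 1 * u r), t) l + fst ((\<lambda>r. x r + (-1) * u r), t) l) / 2),
         (snd ((\<lambda>r. x r + 1 * u r), t) + snd ((\<lambda>r. x r + (-1) * u r), t)) / 2) \<in> conv_hull (Dset N mI m A b c)"
    by (rule conv_mid) (rule mem, simp)+
  then show ?case by simp
qed

lemma sum_list_upt_map: "(\<Sum>v\<leftarrow>map g [0..<k]. f v) = (\<Sum>p<k. (f (g p) :: real))"
  by (induction k) simp_all

lemma sum_list_upt0: "(\<Sum>p\<leftarrow>[0..<k]. f p) = (\<Sum>p<k. (f p :: real))"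
  by (induction k) simp_all

lemma sum_list_concat_map: "(\<Sum>v\<leftarrow>concat xss. f v) = (\<Sum>xs\<leftarrow>xss. \<Sum>v\<leftarrow>xs. (f v :: real))"
  by (induction xss) simp_all

lemma frob_decomp:
  "frob N A (\<lambda>r s. \<Sum>z\<leftarrow>zs. z r * z s) = (\<Sum>z\<leftarrow>zs. qform N A z)"
proof (induction zs)
  case Nil then show ?case by (simp add: frob_def)
next
  case (Cons z zs)
  have "frob N A (\<lambda>r s. \<Sum>z\<leftarrow>z#zs. z r * z s) = qform N A z + frob N A (\<lambda>r s. \<Sum>z\<leftarrow>zs. z r * z s)"
    unfolding frob_def qform_def by (simp add: algebra_simps sum.distrib)
  then show ?case using Cons by simp
qed

lemma frob_cong: "(\<And>r s. r < N \<Longrightarrow> s < N \<Longrightarrow> Z r s = Z' r s) \<Longrightarrow> frob N A Z = frob N A Z'"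
  unfolding frob_def by (intro sum.cong refl) auto

lemma schur1:
  assumes psd: "psd_mat (Suc N) (block_mat 1 x X)" and sx: "sym_mat N X"
  shows "psd_mat N (\<lambda>r s. X r s - x r * x s)"
  unfolding psd_mat_def
proof (intro conjI allI)
  show "sym_mat N (\<lambda>r s. X r s - x r * x s)" using sx by (simp add: sym_mat_def mult.commute)
next
  fix v
  define S where "S = (\<Sum>r<N. x r * v r)"
  define v' where "v' = (\<lambda>r. if r = 0 then - S else v (r - 1))"
  have "0 \<le> qform (Suc N) (block_mat 1 x X) v'" using psd by (simp add: psd_mat_def)
  also have "qform (Suc N) (block_mat 1 x X) v' = S*S - S * (\<Sum>s<N. x s * v s) - S * (\<Sum>r<N. v r * x r) + qform N X v"
    unfolding qform_def
    apply (simp only: sum.lessThan_Suc_shift)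
    apply (simp add: block_mat_def v'_def del: sum.lessThan_Suc)
    apply (simp add: algebra_simps sum.distrib sum_subtractf sum_negf sum_distrib_left del: sum.lessThan_Suc)
    done
  also have "\<dots> = qform N X v - S^2"
    unfolding S_def power2_eq_square by (simp add: mult.commute)
  finally show "0 \<le> qform N (\<lambda>r s. X r s - x r * x s) v"
    by (simp add: qform_minus_rank1 S_def)
qed

lemma sdp_sub_conv:
  assumes N: "N = n*k" and km: "k > Suc m" and mI: "mI \<le> m"
    and sy: "\<forall>i\<le>m. sym_mat N (A i)"
    and kron: "\<forall>i\<le>m. \<forall>r<N. \<forall>s<N. A i r s = kron_I n (M i) r s"
    and mem: "(x, t) \<in> Dsdp N mI m A b c"
  shows "(x, t) \<in> conv_hull (Dset N mI m A b c)"
proof -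
  obtain X where vx: "vec_on N x" and sX: "sym_mat N X"
    and psd: "psd_mat (Suc N) (block_mat 1 x X)"
    and c0: "frob (Suc N) (block_mat (c 0) (b 0) (A 0)) (block_mat 1 x X) \<le> 2 * t"
    and cI: "\<forall>i\<in>{1..mI}. frob (Suc N) (block_mat (c i) (b i) (A i)) (block_mat 1 x X) \<le> 0"
    and cE: "\<forall>i\<in>{mI+1..m}. frob (Suc N) (block_mat (c i) (b i) (A i)) (block_mat 1 x X) = 0"
    using mem by (auto simp: Dsdp_def Let_def)
  define Z where "Z = (\<lambda>r s. X r s - x r * x s)"
  have psdZ: "psd_mat N Z" unfolding Z_def by (rule schur1[OF psd sX])
  obtain zs where zs: "\<forall>r<N. \<forall>s<N. Z r s = (\<Sum>z\<leftarrow>zs. z r * z s)" using psd_decomp[OF psdZ] by blast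
  define vs where "vs = concat (map (\<lambda>z. map (\<lambda>p a. z (p*n+a)) [0..<k]) zs)"
  have key: "frob (Suc N) (block_mat (c i) (b i) (A i)) (block_mat 1 x X)
      = qfun N (A i) (b i) (c i) x + (\<Sum>v\<leftarrow>vs. qform n (M i) v)" if i: "i \<le> m" for i
  proof -
    have "frob (Suc N) (block_mat (c i) (b i) (A i)) (block_mat 1 x X) = qfun N (A i) (b i) (c i) x + frob N (A i) Z"
      unfolding Z_def by (rule frob_block)
    also have "frob N (A i) Z = frob N (A i) (\<lambda>r s. \<Sum>z\<leftarrow>zs. z r * z s)"
      using zs by (intro frob_cong) auto
    also have "\<dots> = (\<Sum>z\<leftarrow>zs. qform N (A i) z)" by (rule frob_decomp)
    also have "\<dots> = (\<Sum>z\<leftarrow>zs. \<Sum>p<k. qform n (M i) (\<lambda>a. z (p*n+a)))"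
    proof -
      have "\<And>z. qform N (A i) z = (\<Sum>p<k. qform n (M i) (\<lambda>a. z (p*n+a)))"
        using qform_kron[OF N] kron i by blast
      then show ?thesis by simp
    qed
    also have "\<dots> = (\<Sum>v\<leftarrow>vs. qform n (M i) v)"
      unfolding vs_def sum_list_concat_map by (simp add: sum_list_upt0 o_def)
    finally show ?thesis .
  qed
  show ?thesis
  proof (rule main_ind[OF N km mI sy kron vx])
    show "\<forall>i\<in>{1..mI}. qfun N (A i) (b i) (c i) x + (\<Sum>v\<leftarrow>vs. qform n (M i) v) \<le> 0"
      using cI key mI by auto
    show "\<forall>i\<in>{mI+1..m}. qfun N (A i) (b i) (c i) x + (\<Sum>v\<leftarrow>vs. qform n (M i) v) = 0"
      using cE key by auto
    show "qfun N (A 0) (b 0) (c 0) x + (\<Sum>v\<leftarrow>vs. qform n (M 0) v) \<le> 2 * t"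
      using c0 key[of 0] by auto
  qed
qed

lemma qform_sumw: "qform n (\<lambda>a b. \<Sum>j<(r::nat). w j * F j a b) v = (\<Sum>j<r. w j * qform n (F j) v)"
  by (induction r) (simp_all add: qform_def algebra_simps sum.distrib sum_distrib_left)

lemma frob_sumw: "frob n Q (\<lambda>a b. \<Sum>j<(r::nat). w j * F j a b) = (\<Sum>j<r. w j * frob n Q (F j))"
  by (induction r) (simp_all add: frob_def algebra_simps sum.distrib sum_distrib_left)

lemma qform_rank1: "qform n (\<lambda>a b. y a * y b) v = (\<Sum>a<n. y a * v a)^2"
  using qform_minus_rank1[of n "\<lambda>a b. 0" y v] by (simp add: qform_def sum_negf)

lemma block_rank1: "(\<lambda>a b. (if a = 0 then 1 else z (a - 1)) * (if b = 0 then 1 else z (b - 1)))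
   = block_mat 1 z (\<lambda>a b. z a * z b)"
  by (intro ext) (simp add: block_mat_def)

lemma conv_sub_sdp:
  assumes "p \<in> conv_hull (Dset N mI m A b c)"
  shows "p \<in> Dsdp N mI m A b c"
proof -
  obtain r :: nat and w P where wP: "\<forall>j<r. 0 \<le> w j \<and> P j \<in> Dset N mI m A b c" "(\<Sum>j<r. w j) = 1"
    "p = ((\<lambda>l. \<Sum>j<r. w j * fst (P j) l), (\<Sum>j<r. w j * snd (P j)))"
    using assms unfolding conv_hull_def by blast
  define xs where "xs = (\<lambda>j. fst (P j))"
  define ts where "ts = (\<lambda>j. snd (P j))"
  have w0: "\<And>j. j < r \<Longrightarrow> 0 \<le> w j" using wP(1) by blast
  have fe: "\<And>j. j < r \<Longrightarrow> feasible N mI m A b c (xs j) \<and> qfun N (A 0) (b 0) (c 0) (xs j) \<le> 2 * ts j"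
    using wP(1) unfolding xs_def ts_def Dset_def by (auto simp: case_prod_beta)
  define x where "x = (\<lambda>l. \<Sum>j<r. w j * xs j l)"
  define t where "t = (\<Sum>j<r. w j * ts j)"
  have p: "p = (x, t)" using wP(3) by (simp add: x_def t_def xs_def ts_def)
  define X where "X = (\<lambda>a b. \<Sum>j<r. w j * (xs j a * xs j b))"
  define y where "y = (\<lambda>j a. if a = 0 then 1 else xs j (a - 1))"
  have Yrep: "block_mat 1 x X = (\<lambda>a b. \<Sum>j<r. w j * (y j a * y j b))"
  proof (intro ext)
    fix a b'
    show "block_mat 1 x X a b' = (\<Sum>j<r. w j * (y j a * y j b'))"
      unfolding block_mat_def y_def x_def X_def using wP(2) by auto
  qed
  have vx: "vec_on N x"
    using fe unfolding x_def vec_on_def feasible_def by simp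
  have sX: "sym_mat N X" unfolding sym_mat_def X_def by (simp add: mult.commute)
  have psd: "psd_mat (Suc N) (block_mat 1 x X)"
    unfolding psd_mat_def
  proof (intro conjI allI)
    show "sym_mat (Suc N) (block_mat 1 x X)" unfolding Yrep sym_mat_def by (simp add: mult.commute)
    fix v
    have "qform (Suc N) (block_mat 1 x X) v = (\<Sum>j<r. w j * (\<Sum>a<Suc N. y j a * v a)^2)"
      unfolding Yrep qform_sumw qform_rank1 ..
    also have "\<dots> \<ge> 0" using w0 by (intro sum_nonneg) simp
    finally show "0 \<le> qform (Suc N) (block_mat 1 x X) v" .
  qed
  have fr: "frob (Suc N) (block_mat (c i) (b i) (A i)) (block_mat 1 x X) = (\<Sum>j<r. w j * qfun N (A i) (b i) (c i) (xs j))" for i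
  proof -
    have "frob (Suc N) (block_mat (c i) (b i) (A i)) (block_mat 1 x X)
       = (\<Sum>j<r. w j * frob (Suc N) (block_mat (c i) (b i) (A i)) (\<lambda>a b. y j a * y j b))"
      unfolding Yrep frob_sumw ..
    also have "\<dots> = (\<Sum>j<r. w j * qfun N (A i) (b i) (c i) (xs j))"
    proof (intro sum.cong refl)
      fix j
      have "frob (Suc N) (block_mat (c i) (b i) (A i)) (\<lambda>a b. y j a * y j b)
          = frob (Suc N) (block_mat (c i) (b i) (A i)) (block_mat 1 (xs j) (\<lambda>a b. xs j a * xs j b))"
        unfolding y_def block_rank1 ..
      also have "\<dots> = qfun N (A i) (b i) (c i) (xs j) + frob N (A i) (\<lambda>r s. xs j r * xs j s - xs j r * xs j s)"
        by (rule frob_block)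
      also have "\<dots> = qfun N (A i) (b i) (c i) (xs j)"
        by (simp add: frob_def)
      finally show "w j * frob (Suc N) (block_mat (c i) (b i) (A i)) (\<lambda>a b. y j a * y j b) = w j * qfun N (A i) (b i) (c i) (xs j)" by simp
    qed
    finally show ?thesis .
  qed
  have c0: "frob (Suc N) (block_mat (c 0) (b 0) (A 0)) (block_mat 1 x X) \<le> 2 * t"
    unfolding fr t_def sum_distrib_left
    by (intro sum_mono) (use fe w0 in \<open>auto intro: mult_left_mono simp: mult.left_commute\<close>)
  have cI: "\<forall>i\<in>{1..mI}. frob (Suc N) (block_mat (c i) (b i) (A i)) (block_mat 1 x X) \<le> 0"
    unfolding fr using fe w0 unfolding feasible_def
    by (auto intro!: sum_nonpos mult_nonneg_nonpos)
  have cE: "\<forall>i\<in>{mI+1..m}. frob (Suc N) (block_mat (c i) (b i) (A i)) (block_mat 1 x X) = 0"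
    unfolding fr using fe unfolding feasible_def by auto
  show ?thesis unfolding p Dsdp_def Let_def
    using vx sX psd c0 cI cE by auto
qed

theorem mainTheorem19:
  fixes N mI mE m :: nat
    and A :: "nat \<Rightarrow> nat \<Rightarrow> nat \<Rightarrow> real"
    and b :: "nat \<Rightarrow> nat \<Rightarrow> real"
    and c :: "nat \<Rightarrow> real"
  assumes "N \<ge> 1"
    and "m = mI + mE" and "m \<ge> 1"
    and "\<forall>i\<le>m. sym_mat N (A i)"
    and "\<exists>x. feasible N mI m A b c x"
    and "\<exists>\<gamma>. (\<forall>i\<in>{1..mI}. \<gamma> i \<ge> 0) \<and> pd_mat N (Agamma m A \<gamma>)"
    and "quad_eig_mult N m A \<ge> m + 2"
  shows "conv_hull (Dset N mI m A b c) = Dsdp N mI m A b c"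
proof -
  note N1 = assms(1) and sy = assms(4)
  have h1: "has_multiplicity N m A 1"
    unfolding has_multiplicity_def
  proof (intro exI[of _ N] conjI allI impI)
    show "N = N * 1" by simp
    fix i assume i: "i \<le> m"
    show "\<exists>M. sym_mat N M \<and> (\<forall>r<N. \<forall>s<N. A i r s = kron_I N M r s)"
      by (rule exI[of _ "A i"]) (use sy i in \<open>auto simp: kron_I_def\<close>)
  qed
  have bnd: "\<forall>y. has_multiplicity N m A y \<longrightarrow> y \<le> N"
  proof (intro allI impI)
    fix y assume "has_multiplicity N m A y"
    then obtain n where "N = n * y" unfolding has_multiplicity_def by blast
    then show "y \<le> N" using N1 by (cases n) auto
  qed
  define k where "k = quad_eig_mult N m A"
  have hk: "has_multiplicity N m A k"
    unfolding k_def quad_eig_mult_def by (rule GreatestI_nat[of "has_multiplicity N m A" 1 N]) (use h1 bnd in auto)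
  have km: "k > Suc m" using assms(7) unfolding k_def by simp
  obtain n where Nn: "N = n * k"
    and ex: "\<forall>i\<le>m. \<exists>M. sym_mat n M \<and> (\<forall>r<N. \<forall>s<N. A i r s = kron_I n M r s)"
    using hk unfolding has_multiplicity_def by blast
  have "\<forall>i. \<exists>M. i \<le> m \<longrightarrow> (\<forall>r<N. \<forall>s<N. A i r s = kron_I n M r s)" using ex by blast
  then obtain M where M: "\<forall>i. i \<le> m \<longrightarrow> (\<forall>r<N. \<forall>s<N. A i r s = kron_I n (M i) r s)"
    by metis
  have kron: "\<forall>i\<le>m. \<forall>r<N. \<forall>s<N. A i r s = kron_I n (M i) r s" using M by blast
  have N': "N = n * k" using Nn by simp
  have mI: "mI \<le> m" using assms(2) by simp
  show ?thesis
  proof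
    show "conv_hull (Dset N mI m A b c) \<subseteq> Dsdp N mI m A b c"
      using conv_sub_sdp by blast
    show "Dsdp N mI m A b c \<subseteq> conv_hull (Dset N mI m A b c)"
    proof
      fix p assume "p \<in> Dsdp N mI m A b c"
      then show "p \<in> conv_hull (Dset N mI m A b c)"
        using sdp_sub_conv[OF N' km mI sy kron, of "fst p" "snd p" b c] by simp
    qed
  qed
qed

end
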